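(* In the setting of the context, let $i\in\{1,\dots,n\}$ and let $(x_1,y_1)$, $(x_2,y_2)$ be two distinct elements of $\mathfrak{X}_i$ with $0<y_1\le y_2$. Then $$\frac{y_2}{y_1}\ge \frac{1}{2Y_S+7/3}\max\big(1,|\beta_i(x_1,y_1)-m(x_1,y_1)|\big).$$
   Context: Setting: $n\ge3$; $F(x,y)=\sum_{i=0}^s a_ix^{n_i}y^{n-n_i}\in\mathbb{Z}[x,y]$ of degree $n$, irreducible over $\mathbb{Q}$, all $a_i\neq0$, $0=n_0<\dots<n_s=n$, discriminant $D$. $R=n^{800\log^2n}$; $h$ a positive integer and $\kappa>1$ an integer with $h\le |D|^{\frac{1}{2(n-1)(2+1/\kappa)}}/\big((3R)^{n/2}(ns)^{2s+n}\big)$; $Y_S=e^6s(ns)^{2s/n}h^{1/(\kappa n)}$. Write $F(x,y)=a\prod_{i=1}^n(x-\alpha_iy)$ ($\alpha_i$ the roots of $F(x,1)$) and $L_i(x,y)=x-\alpha_iy$. A "solution" is a pair $(x,y)\in\mathbb{Z}^2$ with $\gcd(x,y)=1$ and $1\le|F(x,y)|\le h$, with $(x,y)$ and $(-x,-y)$ identified. Assume there is a solution with $0\le y\le Y_S$, and fix one such, $(x_0,y_0)$, with $y_0\ge0$ minimal. Index the roots so that $|L_1(x_0,y_0)|=\min_i|L_i(x_0,y_0)|$. There is at most one solution $(x^*,y^* )$ with $0<y^*\le Y_S$ and $|L_1(x^*,y^* )|<1/(2Y_S)$; let $\mathbf{A}=\{(x_0,y_0)\}$ together with $(x^*,y^*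 )$ if it exists. For a primitive $(x,y)$ choose integers $x',y'$ with $x'y-xy'=1$ and set $\beta_j(x,y)=-L_j(x',y')/L_j(x,y)$ for $j=1,\dots,n$ (so that $F(ux+wx',uy+wy')=F(x,y)\prod_j(u-\beta_j(x,y)w)$), and let $m(x,y)$ be an integer with $|\mathrm{Re}\,\beta_1(x,y)-m(x,y)|\le 1/2$. For $1\le i\le n$, $\mathfrak{X}_i$ is the set of solutions $(x,y)\notin\mathbf{A}$ with $1\le y\le Y_S$ and $|L_i(x,y)|\le\frac{1}{2y}$. *)

theory Defs
  imports Complex_Main "HOL-Computational_Algebra.Polynomial"
begin

definition Fh :: "int poly \<Rightarrow> int \<Rightarrow> int \<Rightarrow> int" where
  "Fh f x y = (\<Sum>k\<le>degree f. coeff f k * x ^ k * y ^ (degree f - k))"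

definition sterms :: "int poly \<Rightarrow> nat" where
  "sterms f = card {k. coeff f k \<noteq> 0} - 1"

definition disc_roots :: "int poly \<Rightarrow> (nat \<Rightarrow> complex) \<Rightarrow> complex" where
  "disc_roots f \<alpha> = of_int (lead_coeff f) ^ (2 * degree f - 2) *
     (\<Prod>i\<in>{1..degree f}. \<Prod>j\<in>{i<..degree f}. (\<alpha> i - \<alpha> j)^2)"

definition RR :: "nat \<Rightarrow> real" where
  "RR n = real n powr (800 * (ln (real n))^2)"

definition YS :: "nat \<Rightarrow> nat \<Rightarrow> int \<Rightarrow> int \<Rightarrow> real" where
  "YS n s h \<kappa> = exp 6 * real s * (real n * real s) powr (2 * real s / real n)
                  * real_of_int h powr (1 / (real_of_int \<kappa> * real n))"

definition Lf :: "(nat \<Rightarrow> complex) \<Rightarrow> nat \<Rightarrow> int \<Rightarrow> int \<Rightarrow> complex" where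
  "Lf \<alpha> j x y = of_int x - \<alpha> j * of_int y"

text \<open>beta_j(x,y) = - L_j(x',y') / L_j(x,y), for a chosen completion (x',y') with x'y - xy' = 1.\<close>
definition beta :: "(nat \<Rightarrow> complex) \<Rightarrow> nat \<Rightarrow> int \<Rightarrow> int \<Rightarrow> int \<Rightarrow> int \<Rightarrow> complex" where
  "beta \<alpha> j x y x' y' = - Lf \<alpha> j x' y' / Lf \<alpha> j x y"

definition is_sol :: "int poly \<Rightarrow> int \<Rightarrow> int \<Rightarrow> int \<Rightarrow> bool" where
  "is_sol f h x y \<longleftrightarrow> coprime x y \<and> 1 \<le> \<bar>Fh f x y\<bar> \<and> \<bar>Fh f x y\<bar> \<le> h"

definition setA :: "int poly \<Rightarrow> int \<Rightarrow> (nat \<Rightarrow> complex) \<Rightarrow> real \<Rightarrow> int \<Rightarrow> int \<Rightarrow> (int \<times> int) set" where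
  "setA f h \<alpha> Y x0 y0 = {(x0, y0)} \<union>
     {(x, y). is_sol f h x y \<and> 0 < y \<and> real_of_int y \<le> Y \<and> cmod (Lf \<alpha> 1 x y) < 1 / (2 * Y)}"

definition setX :: "int poly \<Rightarrow> int \<Rightarrow> (nat \<Rightarrow> complex) \<Rightarrow> real \<Rightarrow> int \<Rightarrow> int \<Rightarrow> nat \<Rightarrow> (int \<times> int) set" where
  "setX f h \<alpha> Y x0 y0 i = {(x, y). is_sol f h x y \<and> (x, y) \<notin> setA f h \<alpha> Y x0 y0 \<and>
      1 \<le> y \<and> real_of_int y \<le> Y \<and> cmod (Lf \<alpha> i x y) \<le> 1 / (2 * real_of_int y)}"

end

theory Submission
  imports Defs
begin
lemma root_not_rat:
  fixes f :: "int poly" and \<alpha> :: "nat \<Rightarrow> complex"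
  assumes irr: "irreducible (map_poly rat_of_int f)" and deg: "degree f \<ge> 2"
    and roots: "map_poly complex_of_int f = smult c (\<Prod>j\<in>{1..degree f}. [:- \<alpha> j, 1:])"
    and j: "j \<in> {1..degree f}"
  shows "\<alpha> j \<noteq> of_rat q"
proof
  assume aq: "\<alpha> j = of_rat q"
  define g where "g = map_poly rat_of_int f"
  have "poly (\<Prod>j\<in>{1..degree f}. [:- \<alpha> j, 1:]) (\<alpha> j) = 0"
    using j by (auto simp: poly_prod prod_zero_iff)
  then have "poly (map_poly complex_of_int f) (\<alpha> j) = 0" using roots by simp
  moreover have "map_poly complex_of_int f = map_poly of_rat g"
    unfolding g_def by (subst map_poly_map_poly) (auto simp: o_def)
  ultimately have "poly (map_poly of_rat g) (of_rat q :: complex) = 0" using aq by simp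
  then have "of_rat (poly g q) = (0::complex)"
    by (simp add: poly_altdef degree_map_poly coeff_map_poly of_rat_sum of_rat_mult of_rat_power)
  then have "poly g q = 0" by simp
  then have "[:-q,1:] dvd g" by (simp add: poly_eq_0_iff_dvd)
  then obtain k where gk: "g = [:-q,1:] * k" by (elim dvdE)
  have dg: "degree g = degree f" unfolding g_def by (simp add: degree_map_poly)
  have "irreducible g" using irr g_def by simp
  from irreducibleD[OF this gk] have "is_unit [:-q,1:] \<or> is_unit k" .
  moreover have "\<not> is_unit [:-q,1:]" by (simp add: is_unit_iff_degree)
  moreover have "k \<noteq> 0" using gk dg deg by auto
  ultimately have "degree k = 0" by (auto simp: is_unit_iff_degree)
  have "degree ([:-q,1:] * k) = degree [:-q,1::rat:] + degree k"
    by (rule degree_mult_eq) (use \<open>k \<noteq> 0\<close> in auto)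
  then have "degree g = 1" using gk \<open>degree k = 0\<close> by simp
  then show False using dg deg by simp
qed
lemma aux_div: "(M::real) \<le> K * r \<Longrightarrow> 0 < K \<Longrightarrow> r \<ge> 1 / K * M"
  by (simp add: pos_divide_le_eq mult.commute)

theorem lemma4p3:
  fixes f :: "int poly" and \<alpha> :: "nat \<Rightarrow> complex" and h \<kappa> x0 y0 :: int
    and i :: nat and x1 y1 x2 y2 x1' y1' m :: int
  defines "n \<equiv> degree f"
  defines "s \<equiv> sterms f"
  defines "D \<equiv> disc_roots f \<alpha>"
  defines "Y \<equiv> YS (degree f) (sterms f) h \<kappa>"
  assumes n3: "n \<ge> 3"
    and irr: "irreducible (map_poly rat_of_int f)"
    and c0: "coeff f 0 \<noteq> 0"
    and roots: "map_poly complex_of_int f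
                  = smult (of_int (lead_coeff f)) (\<Prod>j\<in>{1..n}. [:- \<alpha> j, 1:])"
    and h_pos: "h \<ge> 1" and kappa: "\<kappa> > 1"
    and h_bound: "real_of_int h \<le> cmod D powr (1 / (2 * (real n - 1) * (2 + 1 / real_of_int \<kappa>)))
                     / ((3 * RR n) powr (real n / 2) * (real n * real s) powr (real (2 * s + n)))"
    and sol0: "is_sol f h x0 y0" "0 \<le> y0" "real_of_int y0 \<le> Y"
    and min0: "\<And>x y. is_sol f h x y \<Longrightarrow> 0 \<le> y \<Longrightarrow> y0 \<le> y"
    and idx: "\<And>j. j \<in> {1..n} \<Longrightarrow> cmod (Lf \<alpha> 1 x0 y0) \<le> cmod (Lf \<alpha> j x0 y0)"
    and i: "i \<in> {1..n}"
    and X1: "(x1, y1) \<in> setX f h \<alpha> Y x0 y0 i"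
    and X2: "(x2, y2) \<in> setX f h \<alpha> Y x0 y0 i"
    and dist: "(x1, y1) \<noteq> (x2, y2)"
    and y12: "0 < y1" "y1 \<le> y2"
    and compl: "x1' * y1 - x1 * y1' = 1"
    and m: "\<bar>Re (beta \<alpha> 1 x1 y1 x1' y1') - real_of_int m\<bar> \<le> 1 / 2"
  shows "real_of_int y2 / real_of_int y1 \<ge>
           1 / (2 * Y + 7 / 3) * max 1 (cmod (beta \<alpha> i x1 y1 x1' y1' - of_int m))"
proof -
  have n2: "degree f \<ge> 2" using n3 n_def by simp
  have roots': "map_poly complex_of_int f = smult (of_int (lead_coeff f)) (\<Prod>j\<in>{1..degree f}. [:- \<alpha> j, 1:])"
    using roots n_def by simp
  have notrat: "\<alpha> j \<noteq> of_rat q" if "j \<in> {1..n}" for j q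
    using root_not_rat[OF irr n2 roots'] that n_def by simp
  from X1 have s1: "is_sol f h x1 y1" and nA1: "(x1, y1) \<notin> setA f h \<alpha> Y x0 y0"
    and y1Y: "real_of_int y1 \<le> Y" and a_le: "cmod (Lf \<alpha> i x1 y1) \<le> 1 / (2 * real_of_int y1)"
    unfolding setX_def by auto
  from X2 have s2: "is_sol f h x2 y2"
    and b_le: "cmod (Lf \<alpha> i x2 y2) \<le> 1 / (2 * real_of_int y2)"
    unfolding setX_def by auto
  have Y1: "Y \<ge> 1" using y1Y y12 by linarith
  have c_ge: "cmod (Lf \<alpha> 1 x1 y1) \<ge> 1 / (2 * Y)"
    using nA1 s1 y12 y1Y unfolding setA_def by auto
  define a where "a = Lf \<alpha> i x1 y1"
  define b where "b = Lf \<alpha> i x2 y2"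
  define c where "c = Lf \<alpha> 1 x1 y1"
  have c0': "c \<noteq> 0" using c_ge Y1 c_def by auto
  have a0: "a \<noteq> 0"
  proof
    assume "a = 0"
    then have "\<alpha> i = of_rat (of_int x1 / of_int y1)"
      using y12 unfolding a_def Lf_def by (simp add: of_rat_divide field_simps)
    then show False using notrat[OF i] by blast
  qed
  define w where "w = x2 * y1 - x1 * y2"
  have w0: "w \<noteq> 0"
  proof
    assume "w = 0"
    then have e: "x2 * y1 = x1 * y2" unfolding w_def by simp
    have cp1: "coprime x1 y1" and cp2: "coprime x2 y2" using s1 s2 unfolding is_sol_def by auto
    have "y1 dvd x1 * y2" using e by (metis dvd_triv_right)
    then have d1: "y1 dvd y2" using cp1
      by (metis coprime_commute coprime_dvd_mult_right_iff)
    have "y2 dvd x2 * y1" using e by (metis dvd_triv_right)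
    then have d2: "y2 dvd y1" using cp2
      by (metis coprime_commute coprime_dvd_mult_right_iff)
    have "y1 = y2" using d1 d2 y12 by (simp add: zdvd_antisym_nonneg)
    then have "x1 = x2" using e y12 by simp
    then show False using dist \<open>y1 = y2\<close> by simp
  qed
  have wab: "complex_of_int w = of_int y1 * b - of_int y2 * a"
    unfolding w_def a_def b_def Lf_def by (simp add: algebra_simps)
  have "1 \<le> \<bar>real_of_int w\<bar>" using w0 by linarith
  also have "\<bar>real_of_int w\<bar> = cmod (of_int y1 * b - of_int y2 * a)"
    using wab by (metis norm_of_int)
  also have "\<dots> \<le> real_of_int y1 * cmod b + real_of_int y2 * cmod a"
  proof -
    have "cmod (of_int y1 * b - of_int y2 * a) \<le> cmod (of_int y1 * b) + cmod (of_int y2 * a)"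
      by (rule norm_triangle_ineq4)
    also have "cmod (of_int y1 * b) = real_of_int y1 * cmod b"
      using y12 by (simp add: norm_mult)
    also have "cmod (of_int y2 * a) = real_of_int y2 * cmod a"
      using y12 by (simp add: norm_mult)
    finally show ?thesis .
  qed
  finally have key: "1 \<le> real_of_int y1 * cmod b + real_of_int y2 * cmod a" .
  have betaform: "beta \<alpha> j x1 y1 x1' y1' = - 1 / (of_int y1 * Lf \<alpha> j x1 y1) - of_int y1' / of_int y1"
    if "Lf \<alpha> j x1 y1 \<noteq> 0" for j
  proof -
    have "complex_of_int (x1' * y1 - x1 * y1') = 1" using compl by simp
    then have e: "Lf \<alpha> j x1' y1' * of_int y1 = 1 + of_int y1' * Lf \<alpha> j x1 y1"
      unfolding Lf_def by (simp add: algebra_simps)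
    show ?thesis unfolding beta_def using that y12 e
      by (simp add: field_simps)
  qed
  have bi: "beta \<alpha> i x1 y1 x1' y1' = - 1 / (of_int y1 * a) - of_int y1' / of_int y1"
    using betaform[of i] a0 a_def by simp
  have b1: "beta \<alpha> 1 x1 y1 x1' y1' = - 1 / (of_int y1 * c) - of_int y1' / of_int y1"
    using betaform[of 1] c0' c_def by simp
  define t where "t = real_of_int y1' / real_of_int y1 + real_of_int m"
  have Reb1: "Re (beta \<alpha> 1 x1 y1 x1' y1') = - Re (1 / (of_int y1 * c)) - real_of_int y1' / real_of_int y1"
    unfolding b1 by simp
  have "\<bar>Re (1 / (of_int y1 * c))\<bar> \<le> cmod (1 / (of_int y1 * c))" by (rule abs_Re_le_cmod)
  also have "\<dots> = 1 / (real_of_int y1 * cmod c)" using y12 by (simp add: norm_divide norm_mult)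
  also have "\<dots> \<le> 2 * Y / real_of_int y1"
  proof -
    have "1 / cmod c \<le> 2 * Y" using c_ge c0' Y1 c_def by (simp add: field_simps)
    then show ?thesis using y12 by (simp add: field_simps divide_right_mono)
  qed
  finally have reb: "\<bar>Re (1 / (of_int y1 * c))\<bar> \<le> 2 * Y / real_of_int y1" .
  have tb: "\<bar>t\<bar> \<le> 1/2 + 2 * Y / real_of_int y1"
    using m reb Reb1 unfolding t_def by linarith
  have eqb: "beta \<alpha> i x1 y1 x1' y1' - of_int m = - 1 / (of_int y1 * a) - of_real t"
    unfolding bi t_def by simp
  have "cmod (beta \<alpha> i x1 y1 x1' y1' - of_int m) \<le> cmod (1 / (of_int y1 * a)) + \<bar>t\<bar>"
  proof -
    have "cmod (- 1 / (of_int y1 * a) - of_real t) \<le> cmod (- 1 / (of_int y1 * a)) + cmod (of_real t :: complex)"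
      by (rule norm_triangle_ineq4)
    also have "cmod (- 1 / (of_int y1 * a)) = cmod (1 / (of_int y1 * a))"
      by (simp add: norm_divide)
    finally show ?thesis unfolding eqb by simp
  qed
  also have "cmod (1 / (of_int y1 * a)) = 1 / (real_of_int y1 * cmod a)" using y12 by (simp add: norm_divide norm_mult)
  finally have Bb: "cmod (beta \<alpha> i x1 y1 x1' y1' - of_int m) \<le> 1 / (real_of_int y1 * cmod a) + 1/2 + 2 * Y / real_of_int y1"
    using tb by linarith
  show ?thesis
  proof (cases "y2 \<ge> 2")
    case True
    have "real_of_int y1 * cmod b \<le> real_of_int y1 * (1 / (2 * real_of_int y2))"
      unfolding b_def by (intro mult_left_mono) (use b_le y12 in auto)
    also have "\<dots> \<le> 1/2" using y12 by (simp add: field_simps)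
    finally have "real_of_int y2 * cmod a \<ge> 1/2" using key by linarith
    then have ia: "1 / cmod a \<le> 2 * real_of_int y2" using a0 y12 by (simp add: field_simps)
    have "1 / (real_of_int y1 * cmod a) = (1 / cmod a) / real_of_int y1" by simp
    also have "\<dots> \<le> 2 * real_of_int y2 / real_of_int y1" by (rule divide_right_mono) (use ia y12 in auto)
    finally have "cmod (beta \<alpha> i x1 y1 x1' y1' - of_int m) \<le> (2 * real_of_int y2 + 1/2 * real_of_int y1 + 2 * Y) / real_of_int y1"
      using Bb y12 by (simp add: add_divide_distrib)
    also have "\<dots> \<le> ((2 * Y + 7/3) * real_of_int y2) / real_of_int y1"
    proof (rule divide_right_mono)
      have "real_of_int y1 \<le> Y" by (rule y1Y)
      have "2 * Y * (real_of_int y2 - 1) \<ge> 2 * real_of_int y1 * 1"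
        using True y1Y y12 by (intro mult_mono) auto
      then show "2 * real_of_int y2 + 1/2 * real_of_int y1 + 2 * Y \<le> (2 * Y + 7/3) * real_of_int y2"
        using True y12 by (simp add: algebra_simps)
    qed (use y12 in simp)
    finally have B2: "cmod (beta \<alpha> i x1 y1 x1' y1' - of_int m) \<le> (2 * Y + 7/3) * (real_of_int y2 / real_of_int y1)"
      by simp
    have "1 \<le> (2 * Y + 7/3) * (real_of_int y2 / real_of_int y1)"
    proof -
      have "1 \<le> real_of_int y2 / real_of_int y1" using y12 by simp
      then have "1 * 1 \<le> (2 * Y + 7/3) * (real_of_int y2 / real_of_int y1)"
        by (intro mult_mono) (use Y1 in auto)
      then show ?thesis by simp
    qed
    then have "max 1 (cmod (beta \<alpha> i x1 y1 x1' y1' - of_int m)) \<le> (2 * Y + 7/3) * (real_of_int y2 / real_of_int y1)"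
      using B2 by simp
    moreover have "0 < 2 * Y + 7/3" using Y1 by simp
    ultimately show ?thesis by (rule aux_div)
  next
    case False
    then have yy: "y1 = 1" "y2 = 1" using y12 by auto
    then have "x1 \<noteq> x2" using dist by auto
    have ka: "cmod (of_int x1 - \<alpha> i) \<le> 1/2" using a_le yy unfolding Lf_def by simp
    have kb: "cmod (of_int x2 - \<alpha> i) \<le> 1/2" using b_le yy unfolding Lf_def by simp
    define p where "p = Re (\<alpha> i)"
    define q where "q = Im (\<alpha> i)"
    have "cmod (of_int x1 - \<alpha> i) ^ 2 \<le> (1/2)^2" using ka by (simp add: power_mono)
    then have e1: "(real_of_int x1 - p)^2 + q^2 \<le> (1/2)^2" unfolding p_def q_def cmod_power2 by simp
    have "cmod (of_int x2 - \<alpha> i) ^ 2 \<le> (1/2)^2" using kb by (simp add: power_mono)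
    then have e2: "(real_of_int x2 - p)^2 + q^2 \<le> (1/2)^2" unfolding p_def q_def cmod_power2 by simp
    have d1: "(real_of_int x2 - real_of_int x1)^2 \<ge> 1"
    proof -
      have "\<bar>x2 - x1\<bar> \<ge> 1" using \<open>x1 \<noteq> x2\<close> by linarith
      then have "\<bar>real_of_int x2 - real_of_int x1\<bar> \<ge> 1" by linarith
      then show ?thesis by (metis abs_ge_self one_le_power power2_abs order_trans abs_ge_zero)
    qed
    define r where "r = (real_of_int x1 + real_of_int x2) / 2"
    have iden: "(real_of_int x1 - p)^2 + (real_of_int x2 - p)^2 = 2 * (p - r)^2 + (real_of_int x2 - real_of_int x1)^2 / 2"
      unfolding r_def by (simp add: power2_eq_square field_simps)
    have "2 * (p - r)^2 + 2 * q^2 \<le> 0" using e1 e2 d1 iden power2_eq_square[of "1/2::real"] by linarith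
    then have "(p - r)^2 = 0" "q^2 = 0"
      using zero_le_power2[of "p - r"] zero_le_power2[of q] by linarith+
    then have "p = r" "q = 0" by simp_all
    then have "\<alpha> i = of_rat ((of_int x1 + of_int x2) / 2)"
      unfolding p_def q_def r_def by (simp add: complex_eq_iff of_rat_divide of_rat_add)
    then show ?thesis using notrat[OF i] by blast
  qed
qed

end
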